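(* Let $A$ be an integral domain such that $\operatorname{Sper}A=\emptyset$ (equivalently, there is no ring homomorphism from $A$ to a real closed field; equivalently, $-1$ is a sum of squares in $A$). Let $K$ be the fraction field of $A$, $\bar K$ an algebraic closure and $\bar A$ the integral closure of $A$ in $\bar K$. Then every $\theta\in\bar A$ is an eigenvalue of some symmetric matrix $M\in\operatorname{Sym}_r(A)$ for a suitable $r$.
   Context: $\operatorname{Sper}A$ is the real spectrum of $A$: the set of pairs $(\mathfrak p,P)$ with $\mathfrak p$ a prime ideal of $A$ and $P$ an ordering of the residue field $\kappa(\mathfrak p)$. $\operatorname{Sym}_r(A)$ is the set of symmetric $r\times r$ matrices over $A$; an eigenvalue of $M$ is a root of $\det(X\cdot \mathrm{I}_r-M)$ in $\bar K$. *)

theory Defs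
  imports "HOL-Computational_Algebra.Polynomial" "Jordan_Normal_Form.Char_Poly"
begin

definition is_prime_ideal :: "'a::comm_ring_1 set \<Rightarrow> bool" where
  "is_prime_ideal p \<longleftrightarrow>
     0 \<in> p \<and> (\<forall>a\<in>p. \<forall>b\<in>p. a + b \<in> p) \<and> (\<forall>a\<in>p. \<forall>x. x * a \<in> p) \<and>
     1 \<notin> p \<and> (\<forall>a b. a * b \<in> p \<longrightarrow> a \<in> p \<or> b \<in> p)"

text \<open>A point (p, P) of Sper A, i.e. a prime ideal p together with an
  ordering of the residue field kappa(p) = Frac(A/p), is encoded (as usual, cf.
  Bochnak-Coste-Roy 7.1) by the set P of elements of A whose image in kappa(p) is
  nonnegative for that ordering: P is a prime cone of A with support p.\<close>
definition Sper :: "('a::comm_ring_1 set \<times> 'a set) set" where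
  "Sper = {(p, P). is_prime_ideal p \<and>
     (\<forall>a\<in>P. \<forall>b\<in>P. a + b \<in> P) \<and> (\<forall>a\<in>P. \<forall>b\<in>P. a * b \<in> P) \<and>
     (\<forall>x. x * x \<in> P) \<and>
     (\<forall>a. a \<in> P \<or> - a \<in> P) \<and> {a. a \<in> P \<and> - a \<in> P} = p}"

definition Sym :: "nat \<Rightarrow> 'a mat set" where
  "Sym r = {M. M \<in> carrier_mat r r \<and> transpose_mat M = M}"

end

theory Submission imports Defs begin

definition preord :: "'a::comm_ring_1 set \<Rightarrow> bool" where
  "preord T \<longleftrightarrow> (\<forall>a\<in>T. \<forall>b\<in>T. a+b\<in>T) \<and> (\<forall>a\<in>T. \<forall>b\<in>T. a*b\<in>T) \<and> (\<forall>x. x*x\<in>T) \<and> -1 \<notin> T"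

lemma preord_ext:
  fixes T :: "'a::comm_ring_1 set"
  assumes "preord T" "-1 \<notin> {t1 + c*t2 | t1 t2. t1\<in>T \<and> t2\<in>T}"
  shows "preord {t1 + c*t2 | t1 t2. t1\<in>T \<and> t2\<in>T}"
proof -
  from assms(1) have add: "\<And>a b. a\<in>T \<Longrightarrow> b\<in>T \<Longrightarrow> a+b\<in>T"
    and mul: "\<And>a b. a\<in>T \<Longrightarrow> b\<in>T \<Longrightarrow> a*b\<in>T" and sq: "\<And>x. x*x\<in>T"
    unfolding preord_def by auto
  have z: "0 \<in> T" using sq[of 0] by simp
  let ?T = "{t1 + c*t2 | t1 t2. t1\<in>T \<and> t2\<in>T}"
  have A: "a+b \<in> ?T" if "a \<in> ?T" "b \<in> ?T" for a b
  proof -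
    from that obtain t1 t2 t3 t4 where "t1\<in>T" "t2\<in>T" "t3\<in>T" "t4\<in>T" "a = t1 + c*t2" "b = t3+c*t4" by auto
    then show ?thesis by (intro CollectI exI[of _ "t1+t3"] exI[of _ "t2+t4"]) (auto intro: add simp: algebra_simps)
  qed
  have M: "a*b \<in> ?T" if "a \<in> ?T" "b \<in> ?T" for a b
  proof -
    from that obtain t1 t2 t3 t4 where t: "t1\<in>T" "t2\<in>T" "t3\<in>T" "t4\<in>T" "a = t1 + c*t2" "b = t3+c*t4" by auto
    have "a*b = (t1*t3 + (c*c)*(t2*t4)) + c*(t1*t4 + t2*t3)" using t by (simp add: algebra_simps)
    moreover have "t1*t3 + (c*c)*(t2*t4) \<in> T" using t by (intro add mul sq) auto
    moreover have "t1*t4 + t2*t3 \<in> T" using t by (intro add mul) auto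
    ultimately show ?thesis by blast
  qed
  have S: "x*x \<in> ?T" for x using sq[of x] z by (intro CollectI exI[of _ "x*x"] exI[of _ 0]) auto
  show ?thesis unfolding preord_def using A M S assms(2) by blast
qed

lemma sos_mult:
  fixes xs ys :: "'a::comm_ring_1 list"
  shows "\<exists>zs. sum_list (map (\<lambda>x. x*x) xs) * sum_list (map (\<lambda>x. x*x) ys) = sum_list (map (\<lambda>x. x*x) zs)"
proof (induction xs)
  case Nil then show ?case by (intro exI[of _ "[]"]) simp
next
  case (Cons a xs)
  then obtain zs where zs: "sum_list (map (\<lambda>x. x*x) xs) * sum_list (map (\<lambda>x. x*x) ys) = sum_list (map (\<lambda>x. x*x) zs)" by blast
  have "(a*a) * sum_list (map (\<lambda>x. x*x) ys) = sum_list (map (\<lambda>x. x*x) (map ((*) a) ys))"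
    by (induction ys) (auto simp: algebra_simps)
  then show ?case using zs by (intro exI[of _ "map ((*) a) ys @ zs"]) (simp add: algebra_simps)
qed

lemma aux_m1: assumes "(-1::'a::comm_ring_1) = x + y" shows "1 + x = - y"
proof -
  have "1 + x = 1 + (x + y) - y" by simp
  also have "\<dots> = - y" using assms[symmetric] by simp
  finally show ?thesis .
qed

lemma aux_m2: assumes "(1::'a::comm_ring_1) + x = y" shows "-1 = x + - y"
  using assms by (simp add: algebra_simps)

lemma Sper_nonempty:
  assumes "\<not>(\<exists>xs. 1 + sum_list (map (\<lambda>x. x*x) xs) = (0::'a::comm_ring_1))"
  shows "(Sper :: ('a set \<times> 'a set) set) \<noteq> {}"
proof -
  define S where "S = {a::'a. \<exists>xs. a = sum_list (map (\<lambda>x. x*x) xs)}"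
  have "preord S"
    unfolding preord_def S_def
  proof (intro conjI ballI allI)
    fix a b assume "a \<in> {a::'a. \<exists>xs. a = sum_list (map (\<lambda>x. x*x) xs)}" "b \<in> {a::'a. \<exists>xs. a = sum_list (map (\<lambda>x. x*x) xs)}"
    then obtain xs ys where "a = sum_list (map (\<lambda>x. x*x) xs)" "b = sum_list (map (\<lambda>x. x*x) ys)" by auto
    then show "a + b \<in> {a::'a. \<exists>xs. a = sum_list (map (\<lambda>x. x*x) xs)}"
      "a * b \<in> {a::'a. \<exists>xs. a = sum_list (map (\<lambda>x. x*x) xs)}"
      using sos_mult[of xs ys] by (auto intro!: exI[of _ "xs @ ys"])
  next
    fix x :: 'a show "x*x \<in> {a::'a. \<exists>xs. a = sum_list (map (\<lambda>x. x*x) xs)}" by (auto intro!: exI[of _ "[x]"])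
  next
    show "-1 \<notin> {a::'a. \<exists>xs. a = sum_list (map (\<lambda>x. x*x) xs)}"
    proof
      assume "-1 \<in> {a::'a. \<exists>xs. a = sum_list (map (\<lambda>x. x*x) xs)}"
      then obtain xs :: "'a list" where "-1 = sum_list (map (\<lambda>x. x*x) xs)" by blast
      then have "1 + sum_list (map (\<lambda>x. x*x) xs) = 0" by (metis add.right_inverse)
      with assms show False by blast
    qed
  qed
  define F where "F = {T. S \<subseteq> T \<and> preord T}"
  have "\<exists>M\<in>F. \<forall>X\<in>F. M \<subseteq> X \<longrightarrow> X = M"
  proof (rule subset_Zorn_nonempty)
    show "F \<noteq> {}" using \<open>preord S\<close> unfolding F_def by auto
  next
    fix C assume C: "C \<noteq> {}" "subset.chain F C"
    then have CF: "C \<subseteq> F" and ch: "\<forall>X\<in>C. \<forall>Y\<in>C. X \<subseteq> Y \<or> Y \<subseteq> X" by (auto simp: subset_chain_def)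
    have pr: "preord X" if "X \<in> C" for X using that CF unfolding F_def by auto
    have "preord (\<Union>C)" unfolding preord_def
    proof (intro conjI ballI allI)
      fix a b assume a: "a \<in> \<Union>C" and b: "b \<in> \<Union>C"
      then obtain X Y where XY: "X \<in> C" "Y \<in> C" "a \<in> X" "b \<in> Y" by auto
      show "a + b \<in> \<Union>C" "a * b \<in> \<Union>C"
      proof -
        from ch XY have "X \<subseteq> Y \<or> Y \<subseteq> X" by auto
        then obtain Z where "Z \<in> C" "a \<in> Z" "b \<in> Z" using XY by auto
        then show "a + b \<in> \<Union>C" "a * b \<in> \<Union>C" using pr[of Z] unfolding preord_def by blast+
      qed
    next
      fix x :: 'a obtain X where "X \<in> C" using C by auto
      then show "x*x \<in> \<Union>C" using pr[of X] unfolding preord_def by auto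
    next
      show "-1 \<notin> \<Union>C" using pr unfolding preord_def by auto
    qed
    moreover have "S \<subseteq> \<Union>C" using C CF unfolding F_def by auto
    ultimately show "\<Union>C \<in> F" unfolding F_def by auto
  qed
  then obtain T where TF: "T \<in> F" and max: "\<And>X. X \<in> F \<Longrightarrow> T \<subseteq> X \<Longrightarrow> X = T" by blast
  have pT: "preord T" using TF unfolding F_def by auto
  from pT have add: "\<And>a b. a\<in>T \<Longrightarrow> b\<in>T \<Longrightarrow> a+b\<in>T"
    and mul: "\<And>a b. a\<in>T \<Longrightarrow> b\<in>T \<Longrightarrow> a*b\<in>T" and sq: "\<And>x. x*x\<in>T" and m1: "-1 \<notin> T"
    unfolding preord_def by auto
  have z: "0 \<in> T" using sq[of 0] by simp
  have one: "1 \<in> T" using sq[of 1] by simp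
  have key: "\<exists>t1\<in>T. \<exists>t2\<in>T. -1 = t1 + c*t2" if "c \<notin> T" for c
  proof (rule ccontr)
    assume "\<not> ?thesis"
    then have n: "-1 \<notin> {t1 + c*t2 | t1 t2. t1\<in>T \<and> t2\<in>T}" by auto
    let ?T = "{t1 + c*t2 | t1 t2. t1\<in>T \<and> t2\<in>T}"
    have "preord ?T" using preord_ext[OF pT n] .
    moreover have sub: "T \<subseteq> ?T"
    proof
      fix t assume "t \<in> T" then show "t \<in> ?T" using z by (intro CollectI exI[of _ t] exI[of _ 0]) auto
    qed
    moreover have "S \<subseteq> T" using TF unfolding F_def by auto
    ultimately have "?T = T" using max[of ?T] unfolding F_def by auto
    moreover have "c \<in> ?T" using z one by (intro CollectI exI[of _ 0] exI[of _ 1]) auto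
    ultimately show False using that by auto
  qed
  have tot: "a \<in> T \<or> -a \<in> T" for a
  proof (rule ccontr)
    assume "\<not> ?thesis"
    then have "a \<notin> T" "-a \<notin> T" by auto
    from key[OF this(1)] key[OF this(2)] obtain t1 t2 t3 t4 where t: "t1\<in>T" "t2\<in>T" "t3\<in>T" "t4\<in>T"
      "-1 = t1 + a*t2" "-1 = t3 + (-a)*t4" by blast
    have e: "(1+t1)*(1+t3) = -(a*a)*(t2*t4)"
    proof -
      have "1 + t1 = -(a*t2)" using aux_m1[OF t(5)] by simp
      moreover have "1 + t3 = a*t4" using aux_m1[OF t(6)] by simp
      ultimately show ?thesis by (simp add: algebra_simps)
    qed
    have "-1 = (t1 + t3 + t1*t3) + - (-(a*a)*(t2*t4))" using aux_m2[of "t1 + t3 + t1*t3" "-(a*a)*(t2*t4)"] e by (simp add: algebra_simps)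
    moreover have "t1 + t3 + t1*t3 + (a*a)*(t2*t4) \<in> T" using t by (intro add mul sq) auto
    ultimately show False using m1 by simp
  qed
  define p where "p = {a. a \<in> T \<and> -a \<in> T}"
  have "is_prime_ideal p" unfolding is_prime_ideal_def
  proof (intro conjI ballI allI impI)
    show "0 \<in> p" using z unfolding p_def by auto
  next
    fix a b assume "a \<in> p" "b \<in> p" then show "a + b \<in> p" unfolding p_def using add[of "-a" "-b"] add[of a b] by auto
  next
    fix a x assume a: "a \<in> p"
    show "x * a \<in> p"
    proof (cases "x \<in> T")
      case True then show ?thesis using a mul[of x a] mul[of x "-a"] unfolding p_def by auto
    next
      case False then have "-x \<in> T" using tot by auto
      then show ?thesis using a mul[of "-x" "-a"] mul[of "-x" a] unfolding p_def by auto
    qed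
  next
    show "1 \<notin> p" using m1 unfolding p_def by auto
  next
    fix a b assume ab: "a * b \<in> p"
    show "a \<in> p \<or> b \<in> p"
    proof (rule ccontr)
      assume "\<not> ?thesis"
      then have na: "a \<notin> p" and nb: "b \<notin> p" by auto
      define a' where "a' = (if -a \<notin> T then a else -a)"
      define b' where "b' = (if -b \<notin> T then b else -b)"
      have a': "-a' \<notin> T" using na unfolding a'_def p_def by auto
      have b': "-b' \<notin> T" using nb unfolding b'_def p_def by auto
      have "a'*b' = a*b \<or> a'*b' = -(a*b)" unfolding a'_def b'_def by auto
      then have "-(a'*b') \<in> T" using ab unfolding p_def by auto
      from key[OF a'] key[OF b'] obtain t1 t2 t3 t4 where t: "t1\<in>T" "t2\<in>T" "t3\<in>T" "t4\<in>T"
        "-1 = t1 + (-a')*t2" "-1 = t3 + (-b')*t4" by blast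
      have "1 + t1 = a'*t2" using aux_m1[OF t(5)] by simp
      moreover have "1 + t3 = b'*t4" using aux_m1[OF t(6)] by simp
      ultimately have e: "(1+t1)*(1+t3) = (a'*b')*(t2*t4)" by (simp add: algebra_simps)
      have "-1 = (t1 + t3 + t1*t3) + - ((a'*b')*(t2*t4))" using aux_m2[of "t1 + t3 + t1*t3" "(a'*b')*(t2*t4)"] e by (simp add: algebra_simps)
      moreover have "t1 + t3 + t1*t3 + (-(a'*b'))*(t2*t4) \<in> T" using t \<open>-(a'*b') \<in> T\<close> by (intro add mul) auto
      ultimately show False using m1 by simp
    qed
  qed
  then have "(p, T) \<in> Sper" unfolding Sper_def p_def using add mul sq tot by auto
  then show ?thesis by auto
qed


lemma sum_split_nk: "sum (g::nat \<Rightarrow> 'b::comm_monoid_add) {..<n*k} = (\<Sum>b<n. \<Sum>j<k. g (b*k+j))"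
proof -
  have "sum g {..<n*k} = (\<Sum>b<n. sum g {b*k..<b*k+k})" by (rule sum.nat_group[symmetric])
  also have "\<dots> = (\<Sum>b<n. \<Sum>j<k. g (b*k+j))"
  proof (rule sum.cong[OF refl])
    fix b
    have "sum g {b*k..<b*k+k} = sum (\<lambda>j. g (j + b*k)) {0..<k}"
      using sum.shift_bounds_nat_ivl[of g 0 "b*k" k] by (simp add: add.commute)
    then show "sum g {b*k..<b*k+k} = (\<Sum>j<k. g (b*k+j))" by (simp add: atLeast0LessThan add.commute)
  qed
  finally show ?thesis .
qed

lemma construction:
  fixes \<phi> :: "'a::idom \<Rightarrow> 'k::field" and \<theta> :: 'k
  assumes hom: "\<phi> 0 = 0" "\<phi> 1 = 1" "\<And>x y. \<phi> (x + y) = \<phi> x + \<phi> y"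
      "\<And>x y. \<phi> (x * y) = \<phi> x * \<phi> y"
    and inj: "inj \<phi>"
    and f: "monic f" "poly (map_poly \<phi> f) \<theta> = 0"
    and sos: "1 + sum_list (map (\<lambda>x. x*x) xs) = (0::'a)"
  shows "\<exists>r. \<exists>M \<in> Sym r. poly (map_poly \<phi> (char_poly M)) \<theta> = 0"
proof -
  interpret h: comm_ring_hom \<phi> by unfold_locales (auto simp: hom)
  define n where "n = degree f"
  define k where "k = Suc (length xs)"
  define u :: "nat \<Rightarrow> 'a" where "u j = (if j = 0 then 1 else xs ! (j-1))" for j
  define C :: "nat \<Rightarrow> nat \<Rightarrow> 'a" where "C a b = (if a + 1 < n then (if b = a+1 then 1 else 0) else - coeff f b)" for a b
  define P :: "nat \<Rightarrow> nat \<Rightarrow> 'a" where "P i j = (if j = 0 then u i else 0)" for i j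
  define N where "N = n * k"
  define M where "M = mat N N (\<lambda>(I,J). C (I div k) (J div k) * P (I mod k) (J mod k) + C (J div k) (I div k) * P (J mod k) (I mod k))"
  define z where "z = vec N (\<lambda>I. \<phi> (u (I mod k)) * \<theta>^(I div k))"
  have nz: "\<phi> x \<noteq> 0" if "x \<noteq> 0" for x
  proof
    assume "\<phi> x = 0" then have "\<phi> x = \<phi> 0" using hom(1) by simp
    then show False using inj that by (metis injD)
  qed
  have degm: "degree (map_poly \<phi> f) = n" unfolding n_def by (rule degree_map_poly) (metis nz hom(1) leading_coeff_0_iff)
  have n1: "n \<ge> 1"
  proof (rule ccontr)
    assume "\<not> n \<ge> 1" then have "n = 0" by auto
    then have "f = 1" using f(1) unfolding n_def by (metis monic_degree_0)
    then show False using f(2) by simp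
  qed
  have k0: "k > 0" unfolding k_def by simp
  have usum: "(\<Sum>j<k. u j * u j) = 0"
  proof -
    have "(\<Sum>j<k. u j * u j) = 1 + (\<Sum>j<length xs. xs!j * xs!j)"
      unfolding k_def by (subst sum.lessThan_Suc_shift) (simp add: u_def)
    also have "\<dots> = 1 + sum_list (map (\<lambda>x. x*x) xs)"
      by (simp add: sum_list_sum_nth atLeast0LessThan)
    finally show ?thesis using sos by simp
  qed
  have Crow: "(\<Sum>b<n. \<phi> (C a b) * \<theta>^b) = \<theta>^(a+1)" if "a < n" for a
  proof (cases "a + 1 < n")
    case True
    then have "(\<Sum>b<n. \<phi> (C a b) * \<theta>^b) = (\<Sum>b<n. if b = a+1 then \<theta>^b else 0)"
      by (intro sum.cong) (auto simp: C_def hom)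
    also have "\<dots> = \<theta>^(a+1)" using True by simp
    finally show ?thesis .
  next
    case False
    then have a: "a + 1 = n" using that by auto
    have "0 = poly (map_poly \<phi> f) \<theta>" using f(2) by simp
    also have "\<dots> = (\<Sum>b\<le>n. \<phi> (coeff f b) * \<theta>^b)" unfolding poly_altdef degm by (simp add: coeff_map_poly hom)
    also have "\<dots> = (\<Sum>b<n. \<phi> (coeff f b) * \<theta>^b) + \<theta>^n"
      using f(1) unfolding n_def by (simp add: lessThan_Suc_atMost[symmetric] hom)
    finally have e: "(\<Sum>b<n. \<phi> (coeff f b) * \<theta>^b) = - (\<theta> ^ n)" by (simp add: eq_neg_iff_add_eq_0)
    have "(\<Sum>b<n. \<phi> (C a b) * \<theta>^b) = (\<Sum>b<n. - (\<phi> (coeff f b) * \<theta>^b))"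
      using False by (intro sum.cong) (auto simp: C_def h.hom_uminus)
    also have "\<dots> = \<theta>^n" using e by (simp add: sum_negf)
    finally show ?thesis using a by simp
  qed
  have MC: "M \<in> carrier_mat N N" unfolding M_def by simp
  have sym: "transpose_mat M = M"
    by (rule eq_matI) (auto simp: M_def)
  have ev: "map_mat \<phi> M *\<^sub>v z = \<theta> \<cdot>\<^sub>v z"
  proof (rule eq_vecI)
    show "dim_vec (map_mat \<phi> M *\<^sub>v z) = dim_vec (\<theta> \<cdot>\<^sub>v z)" by (simp add: M_def z_def)
  next
    fix I assume "I < dim_vec (\<theta> \<cdot>\<^sub>v z)"
    then have I: "I < N" by (simp add: z_def)
    define a where "a = I div k"
    define i where "i = I mod k"
    have a: "a < n" using I k0 unfolding a_def N_def by (simp add: less_mult_imp_div_less)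
    have i: "i < k" using k0 unfolding i_def by simp
    have "(map_mat \<phi> M *\<^sub>v z) $ I = (\<Sum>J<N. \<phi> (M $$ (I,J)) * z $ J)"
      using I by (simp add: M_def z_def scalar_prod_def atLeast0LessThan)
    also have "\<dots> = (\<Sum>b<n. \<Sum>j<k. \<phi> (M $$ (I,b*k+j)) * z $ (b*k+j))"
      unfolding N_def by (rule sum_split_nk)
    also have "\<dots> = (\<Sum>b<n. \<Sum>j<k. (\<phi> (C a b) * \<phi> (P i j) + \<phi> (C b a) * \<phi> (P j i)) * (\<phi> (u j) * \<theta>^b))"
    proof (intro sum.cong refl)
      fix b j assume b: "b \<in> {..<n}" and j: "j \<in> {..<k}"
      have bj: "b*k+j < N" using b j unfolding N_def
        by (metis lessThan_iff add.commute less_imp_le_nat mult.commute mult_Suc_right nat_add_left_cancel_less order_less_le_trans Suc_leI mult_le_mono2)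
      have d: "(b*k+j) div k = b" "(b*k+j) mod k = j" using j by auto
      show "\<phi> (M $$ (I,b*k+j)) * z $ (b*k+j) = (\<phi> (C a b) * \<phi> (P i j) + \<phi> (C b a) * \<phi> (P j i)) * (\<phi> (u j) * \<theta>^b)"
        using I bj d unfolding M_def z_def a_def i_def by (simp add: hom)
    qed
    also have "\<dots> = (\<Sum>b<n. \<phi> (C a b) * \<theta>^b * (\<Sum>j<k. \<phi> (P i j) * \<phi> (u j)))
        + (\<Sum>b<n. \<phi> (C b a) * \<theta>^b * (\<Sum>j<k. \<phi> (P j i) * \<phi> (u j)))"
      by (simp add: sum.distrib sum_distrib_left algebra_simps)
    also have "(\<Sum>j<k. \<phi> (P i j) * \<phi> (u j)) = \<phi> (u i)"
    proof -
      have "(\<Sum>j<k. \<phi> (P i j) * \<phi> (u j)) = (\<Sum>j<k. if j = 0 then \<phi> (u i) else 0)"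
        by (intro sum.cong) (auto simp: P_def u_def hom)
      also have "\<dots> = \<phi> (u i)" using k0 by simp
      finally show ?thesis .
    qed
    also have "(\<Sum>j<k. \<phi> (P j i) * \<phi> (u j)) = 0"
    proof (cases "i = 0")
      case True
      then have "(\<Sum>j<k. \<phi> (P j i) * \<phi> (u j)) = \<phi> (\<Sum>j<k. u j * u j)"
        by (simp add: P_def h.hom_sum hom)
      then show ?thesis using usum hom by simp
    next
      case False then show ?thesis by (simp add: P_def hom)
    qed
    also have "(\<Sum>b<n. \<phi> (C a b) * \<theta>^b * \<phi> (u i)) + (\<Sum>b<n. \<phi> (C b a) * \<theta>^b * 0) = \<phi> (u i) * \<theta>^(a+1)"
    proof -
      have "(\<Sum>b<n. \<phi> (C a b) * \<theta>^b * \<phi> (u i)) = (\<Sum>b<n. \<phi> (C a b) * \<theta>^b) * \<phi> (u i)"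
        by (rule sum_distrib_right[symmetric])
      then show ?thesis using Crow[OF a] by simp
    qed
    also have "\<dots> = (\<theta> \<cdot>\<^sub>v z) $ I" using I unfolding z_def a_def i_def by simp
    finally show "(map_mat \<phi> M *\<^sub>v z) $ I = (\<theta> \<cdot>\<^sub>v z) $ I" .
  qed
  have N0: "0 < N" using n1 k0 unfolding N_def by simp
  have "z \<noteq> 0\<^sub>v N"
  proof
    assume "z = 0\<^sub>v N"
    then have "z $ 0 = 0" using N0 by simp
    then show False using N0 by (simp add: z_def u_def hom)
  qed
  then have "eigenvector (map_mat \<phi> M) z \<theta>" unfolding eigenvector_def using ev by (simp add: M_def z_def)
  then have "eigenvalue (map_mat \<phi> M) \<theta>" unfolding eigenvalue_def by blast
  then have "poly (char_poly (map_mat \<phi> M)) \<theta> = 0"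
    using eigenvalue_root_char_poly[of "map_mat \<phi> M" N] MC by simp
  then have "poly (map_poly \<phi> (char_poly M)) \<theta> = 0" using h.char_poly_hom[OF MC] by simp
  moreover have "M \<in> Sym N" unfolding Sym_def using MC sym by simp
  ultimately show ?thesis by blast
qed

theorem corollary4p4:
  fixes \<phi> :: "'a::idom \<Rightarrow> 'k::alg_closed_field" and \<theta> :: 'k
  assumes Sper_empty: "(Sper :: ('a set \<times> 'a set) set) = {}"
    and hom: "\<phi> 0 = 0" "\<phi> 1 = 1" "\<And>x y. \<phi> (x + y) = \<phi> x + \<phi> y"
      "\<And>x y. \<phi> (x * y) = \<phi> x * \<phi> y"
    and inj: "inj \<phi>"
    and integral: "\<exists>f :: 'a poly. monic f \<and> poly (map_poly \<phi> f) \<theta> = 0"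
  shows "\<exists>r. \<exists>M \<in> Sym r. poly (map_poly \<phi> (char_poly M)) \<theta> = 0"
proof -
  obtain xs :: "'a list" where sos: "1 + sum_list (map (\<lambda>x. x*x) xs) = 0"
    using Sper_nonempty Sper_empty by blast
  obtain f :: "'a poly" where f: "monic f" "poly (map_poly \<phi> f) \<theta> = 0" using integral by blast
  show ?thesis by (rule construction[OF hom inj f sos])
qed

end
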